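(* Let $\{\mu_n\}$ be a sequence of positive finite measures on $\mathbb{R}$ such that each $G_{\mu_n}$ is injective on $\mathbb{C}^+$. If $\mu_n$ converges weakly to a nonzero positive finite measure $\mu$, then $G_\mu$ is injective on $\mathbb{C}^+$.
   Context: For a positive finite measure $\mu$ on $\mathbb{R}$, $G_\mu(z)=\int_{\mathbb{R}}\frac{1}{z-x}\,d\mu(x)$ for $z\in\mathbb{C}^+=\{\operatorname{Im}z>0\}$. Weak convergence means $\int f\,d\mu_n\to\int f\,d\mu$ for all bounded continuous $f$. *)

theory Defs
  imports "HOL-Probability.Probability"
begin

definition cauchy_transform :: "real measure \<Rightarrow> complex \<Rightarrow> complex" where
  "cauchy_transform \<mu> z = (\<integral>x. 1 / (z - complex_of_real x) \<partial>\<mu>)"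

definition weakly_converges :: "(nat \<Rightarrow> real measure) \<Rightarrow> real measure \<Rightarrow> bool" where
  "weakly_converges M N \<longleftrightarrow>
     (\<forall>f :: real \<Rightarrow> real. continuous_on UNIV f \<and> bounded (range f) \<longrightarrow>
        (\<lambda>n. \<integral>x. f x \<partial>(M n)) \<longlonglongrightarrow> (\<integral>x. f x \<partial>N))"

end

theory Submission
  imports Defs "HOL-Complex_Analysis.Complex_Analysis"
begin

lemma ct_meas:
  assumes "sets M = sets borel"
  shows "(\<lambda>x::real. 1 / (z - complex_of_real x)) \<in> borel_measurable M"
  using assms by (simp add: measurable_cong_sets[OF assms refl]) measurable


lemma im_le_norm_diff:
  assumes "Im z > 0"
  shows "Im z \<le> norm (z - complex_of_real x)"
  using abs_Im_le_cmod[of "z - complex_of_real x"] assms by simp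

lemma norm_inv_le:
  assumes "Im z > 0"
  shows "norm (1 / (z - complex_of_real x)) \<le> 1 / Im z"
proof -
  have "Im z \<le> norm (z - complex_of_real x)" using im_le_norm_diff[OF assms] .
  then show ?thesis using assms by (simp add: norm_divide frac_le divide_le_eq)
qed

lemma norm_int_le:
  fixes f :: "real \<Rightarrow> complex"
  assumes "finite_measure M" "f \<in> borel_measurable M" "\<And>x. norm (f x) \<le> B"
  shows "norm (integral\<^sup>L M f) \<le> B * measure M (space M)"
proof -
  interpret finite_measure M by fact
  have int: "integrable M f" using assms by (intro integrable_const_bound[where B=B]) auto
  have "norm (integral\<^sup>L M f) \<le> integral\<^sup>L M (\<lambda>x. norm (f x))" by (rule integral_norm_bound)
  also have "\<dots> \<le> integral\<^sup>L M (\<lambda>x. B)"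
    by (intro integral_mono) (use int assms(3) in auto)
  also have "\<dots> = B * measure M (space M)" by simp
  finally show ?thesis .
qed



lemma ct_int:
  assumes "sets M = sets borel" "finite_measure M" "Im z > 0"
  shows "integrable M (\<lambda>x::real. 1 / (z - complex_of_real x))"
proof -
  interpret finite_measure M by fact
  show ?thesis using ct_meas[OF assms(1)] norm_inv_le[OF assms(3)]
    by (intro integrable_const_bound[where B="1/Im z"]) auto
qed

lemma ct_int2:
  assumes "sets M = sets borel" "finite_measure M" "Im z > 0"
  shows "integrable M (\<lambda>x::real. 1 / (z - complex_of_real x)^2)"
proof -
  interpret finite_measure M by fact
  have m: "(\<lambda>x::real. 1 / (z - complex_of_real x)^2) \<in> borel_measurable M"
    by (simp add: measurable_cong_sets[OF assms(1) refl]) measurable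
  have "norm (1 / (z - complex_of_real x)^2) \<le> (1/Im z)^2" for x
  proof -
    have "norm (1 / (z - complex_of_real x)^2) = (norm (1 / (z - complex_of_real x)))^2"
      by (simp add: norm_divide norm_power power_one_over)
    also have "\<dots> \<le> (1/Im z)^2" using norm_inv_le[OF assms(3)] by (intro power_mono) auto
    finally show ?thesis .
  qed
  then show ?thesis using m
    by (intro integrable_const_bound[where B="(1/Im z)^2"]) auto
qed

lemma ct_norm:
  assumes "sets M = sets borel" "finite_measure M" "Im z > 0"
  shows "norm (cauchy_transform M z) \<le> measure M (space M) / Im z"
  using norm_int_le[OF assms(2) ct_meas[OF assms(1)] norm_inv_le[OF assms(3)]]
  by (simp add: cauchy_transform_def)

lemma alg: "(a::complex) \<noteq> 0 \<Longrightarrow> b \<noteq> 0 \<Longrightarrow> a - b \<noteq> 0 \<Longrightarrow>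
   (1/a - 1/b)/(a-b) + 1/b^2 = (a-b)/(a*b^2)"
  by (simp add: field_simps power2_eq_square)

lemma ct_deriv:
  assumes M: "sets M = sets borel" "finite_measure M" and z: "Im z > 0"
  shows "(cauchy_transform M has_field_derivative
           (- integral\<^sup>L M (\<lambda>x. 1 / (z - complex_of_real x)^2))) (at z)"
proof -
  define m where "m = measure M (space M)"
  have m0: "m \<ge> 0" by (simp add: m_def)
  define D where "D = - integral\<^sup>L M (\<lambda>x. 1 / (z - complex_of_real x)^2)"
  define G where "G = cauchy_transform M"
  have ev: "\<forall>\<^sub>F w in at z. norm ((G w - G z) / (w - z) - D) \<le> norm (w - z) * (2 / Im z ^ 3) * m"
    unfolding eventually_at
  proof (intro exI[of _ "Im z / 2"] conjI ballI impI)
    show "Im z / 2 > 0" using z by simp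
    fix w assume "w \<in> UNIV" and w: "w \<noteq> z \<and> dist w z < Im z / 2"
    have "\<bar>Im w - Im z\<bar> \<le> norm (w - z)" using abs_Im_le_cmod[of "w - z"] by simp
    with w have Imw: "Im w > Im z / 2" by (auto simp: dist_norm)
    then have wpos: "Im w > 0" using z by simp
    have wx: "w - complex_of_real x \<noteq> 0" for x using wpos by (auto simp: complex_eq_iff)
    have zx: "z - complex_of_real x \<noteq> 0" for x using z by (auto simp: complex_eq_iff)
    have wz: "w - z \<noteq> 0" using w by simp
    have eq: "(G w - G z) / (w - z) - D =
       integral\<^sup>L M (\<lambda>x. (w - z) / ((w - complex_of_real x) * (z - complex_of_real x)^2))"
    proof -
      have "(G w - G z) / (w - z) - D =
        integral\<^sup>L M (\<lambda>x. (1 / (w - complex_of_real x) - 1 / (z - complex_of_real x)) / (w - z)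
            + 1 / (z - complex_of_real x)^2)"
        unfolding G_def cauchy_transform_def D_def
        by (subst Bochner_Integration.integral_add)
           (auto intro!: ct_int[OF M] ct_int2[OF M] Bochner_Integration.integrable_diff
              simp: z wpos Bochner_Integration.integral_diff[OF ct_int[OF M wpos] ct_int[OF M z]])
      also have "\<dots> = integral\<^sup>L M (\<lambda>x. (w - z) / ((w - complex_of_real x) * (z - complex_of_real x)^2))"
      proof (intro Bochner_Integration.integral_cong refl)
        fix x
        have "w - z = (w - complex_of_real x) - (z - complex_of_real x)" by simp
        then show "(1 / (w - complex_of_real x) - 1 / (z - complex_of_real x)) / (w - z)
            + 1 / (z - complex_of_real x)^2 = (w - z) / ((w - complex_of_real x) * (z - complex_of_real x)^2)"
          using alg[OF wx[of x] zx[of x]] wz by simp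
      qed
      finally show ?thesis .
    qed
    have bd: "norm ((w - z) / ((w - complex_of_real x) * (z - complex_of_real x)^2))
         \<le> norm (w - z) * (2 / Im z ^ 3)" for x
    proof -
      have a: "Im z / 2 \<le> norm (w - complex_of_real x)" using im_le_norm_diff[OF wpos, of x] Imw by simp
      have b: "Im z ^ 2 \<le> norm (z - complex_of_real x) ^ 2"
        using im_le_norm_diff[OF z, of x] z by (intro power_mono) auto
      have "(Im z / 2) * Im z ^ 2 \<le> norm (w - complex_of_real x) * norm (z - complex_of_real x) ^ 2"
        using a b z by (intro mult_mono) auto
      moreover have "(Im z / 2) * Im z ^ 2 > 0" using z by simp
      ultimately have "norm (w - z) / (norm (w - complex_of_real x) * norm (z - complex_of_real x) ^ 2)
          \<le> norm (w - z) / ((Im z / 2) * Im z ^ 2)"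
        by (intro divide_left_mono) auto
      also have "\<dots> = norm (w - z) * (2 / Im z ^ 3)" by (simp add: field_simps power3_eq_cube power2_eq_square)
      finally show ?thesis by (simp add: norm_divide norm_mult norm_power)
    qed
    have "(\<lambda>x::real. (w - z) / ((w - complex_of_real x) * (z - complex_of_real x)^2)) \<in> borel_measurable M"
      by (simp add: measurable_cong_sets[OF M(1) refl]) measurable
    from norm_int_le[OF M(2) this bd]
    show "norm ((G w - G z) / (w - z) - D) \<le> norm (w - z) * (2 / Im z ^ 3) * m"
      by (simp add: eq m_def)
  qed
  have lim: "((\<lambda>w. norm (w - z) * (2 / Im z ^ 3) * m) \<longlongrightarrow> 0) (at z)"
  proof -
    have "((\<lambda>w. norm (w - z) * (2 / Im z ^ 3) * m) \<longlongrightarrow> norm (z - z) * (2 / Im z ^ 3) * m) (at z)"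
      by (intro tendsto_intros)
    then show ?thesis by simp
  qed
  have "((\<lambda>w. (G w - G z) / (w - z) - D) \<longlongrightarrow> 0) (at z)"
    by (rule Lim_null_comparison[OF ev lim])
  then have "((\<lambda>w. (G w - G z) / (w - z)) \<longlongrightarrow> D) (at z)"
    by (rule LIM_zero_cancel)
  then show ?thesis unfolding G_def D_def has_field_derivative_iff .
qed

lemma ct_holo:
  assumes "sets M = sets borel" "finite_measure M"
  shows "cauchy_transform M holomorphic_on {z. Im z > 0}"
proof -
  have o: "open {z. Im z > 0}" by (simp add: open_halfspace_Im_gt)
  show ?thesis unfolding holomorphic_on_open[OF o]
    using ct_deriv[OF assms] by blast
qed


lemma weak_ct:
  assumes "weakly_converges \<mu>s \<mu>" "Im z > 0"
    and s: "\<And>n. sets (\<mu>s n) = sets borel" "\<And>n. finite_measure (\<mu>s n)"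
    and s2: "sets \<mu> = sets borel" "finite_measure \<mu>"
  shows "(\<lambda>n. cauchy_transform (\<mu>s n) z) \<longlonglongrightarrow> cauchy_transform \<mu> z"
proof -
  have zx: "z - complex_of_real x \<noteq> 0" for x using assms(2) by (auto simp: complex_eq_iff)
  have cont: "continuous_on UNIV (\<lambda>x::real. 1 / (z - complex_of_real x))"
    using zx by (intro continuous_intros) auto
  have bRe: "bounded (range (\<lambda>x::real. Re (1 / (z - complex_of_real x))))"
  proof -
    have "\<bar>Re (1 / (z - complex_of_real x))\<bar> \<le> 1 / Im z" for x
      using abs_Re_le_cmod norm_inv_le[OF assms(2)] order_trans by metis
    then show ?thesis unfolding bounded_iff by (intro exI[of _ "1 / Im z"]) auto
  qed
  have bIm: "bounded (range (\<lambda>x::real. Im (1 / (z - complex_of_real x))))"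
  proof -
    have "\<bar>Im (1 / (z - complex_of_real x))\<bar> \<le> 1 / Im z" for x
      using abs_Im_le_cmod norm_inv_le[OF assms(2)] order_trans by metis
    then show ?thesis unfolding bounded_iff by (intro exI[of _ "1 / Im z"]) auto
  qed
  have cRe: "continuous_on UNIV (\<lambda>x::real. Re (1 / (z - complex_of_real x)))"
    using zx by (intro continuous_intros) auto
  have cIm: "continuous_on UNIV (\<lambda>x::real. Im (1 / (z - complex_of_real x)))"
    using zx by (intro continuous_intros) auto
  have r: "(\<lambda>n. \<integral>x. Re (1 / (z - complex_of_real x)) \<partial>\<mu>s n) \<longlonglongrightarrow> (\<integral>x. Re (1 / (z - complex_of_real x)) \<partial>\<mu>)"
    using assms(1) cRe bRe unfolding weakly_converges_def by blast
  have i: "(\<lambda>n. \<integral>x. Im (1 / (z - complex_of_real x)) \<partial>\<mu>s n) \<longlonglongrightarrow> (\<integral>x. Im (1 / (z - complex_of_real x)) \<partial>\<mu>)"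
    using assms(1) cIm bIm unfolding weakly_converges_def by blast
  show ?thesis
    unfolding tendsto_complex_iff cauchy_transform_def
    using r i by (simp add: integral_Re[OF ct_int[OF s assms(2)]] integral_Im[OF ct_int[OF s assms(2)]]
       integral_Re[OF ct_int[OF s2 assms(2)]] integral_Im[OF ct_int[OF s2 assms(2)]])
qed


lemma Im_inv_i: "Im (1 / (\<i> - complex_of_real x)) = - 1 / (x^2 + 1)"
  by (simp add: Im_divide power2_eq_square)

lemma ct_nonconst:
  assumes M: "sets M = sets borel" "finite_measure M" and ne: "emeasure M (space M) \<noteq> 0"
  shows "\<not> cauchy_transform M constant_on {z. Im z > 0}"
proof
  assume con: "cauchy_transform M constant_on {z. Im z > 0}"
  interpret finite_measure M by fact
  define m where "m = measure M (space M)"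
  have m0: "m \<ge> 0" by (simp add: m_def)
  define h where "h = (\<lambda>x::real. 1 / (x^2 + 1))"
  have hm: "h \<in> borel_measurable M"
    unfolding h_def by (simp add: measurable_cong_sets[OF M(1) refl]) measurable
  have hb: "norm (h x) \<le> 1" for x
  proof -
    have p: "x^2 + 1 > (0::real)" by (simp add: add_nonneg_pos)
    have "x^2 + 1 \<ge> (1::real)" by simp
    then show ?thesis using p unfolding h_def by (simp add: divide_le_eq)
  qed
  have hint: "integrable M h"
    using hm hb by (intro integrable_const_bound[where B=1]) auto
  have hnn: "AE x in M. 0 \<le> h x" by (simp add: h_def)
  have "integral\<^sup>L M h \<noteq> 0"
  proof
    assume "integral\<^sup>L M h = 0"
    then have "AE x in M. h x = 0" using integral_nonneg_eq_0_iff_AE[OF hint hnn] by simp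
    then have "AE x in M. False" by (rule eventually_mono) (auto simp: h_def, metis add_nonneg_pos zero_le_power2 zero_less_one less_irrefl)
    then have "ae_filter M = bot" using trivial_limit_def by blast
    then show False using ne ae_filter_eq_bot_iff by blast
  qed
  moreover have "integral\<^sup>L M h \<ge> 0" using hnn by (rule integral_nonneg_AE)
  ultimately have cpos: "integral\<^sup>L M h > 0" by simp
  define c where "c = integral\<^sup>L M h"
  have i: "Im \<i> > 0" by simp
  have ImG: "Im (cauchy_transform M \<i>) = - c"
    unfolding cauchy_transform_def c_def integral_Im[OF ct_int[OF M i], symmetric] Im_inv_i h_def
    by simp
  define y where "y = (m + 1) / c"
  have ypos: "y > 0" using cpos m0 by (simp add: y_def c_def)
  have iy: "Im (Complex 0 y) > 0" using ypos by simp
  have "norm (cauchy_transform M (Complex 0 y)) \<le> m / y"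
    using ct_norm[OF M iy] by (simp add: m_def)
  also have "\<dots> < c" using cpos m0 unfolding y_def c_def by (simp add: field_simps)
  also have "c = \<bar>Im (cauchy_transform M \<i>)\<bar>" using ImG cpos c_def by simp
  also have "\<dots> \<le> norm (cauchy_transform M \<i>)" by (rule abs_Im_le_cmod)
  finally have "cauchy_transform M (Complex 0 y) \<noteq> cauchy_transform M \<i>" by auto
  moreover from con obtain k where "\<forall>z\<in>{z. Im z > 0}. cauchy_transform M z = k"
    unfolding constant_on_def by blast
  ultimately show False using iy i by auto
qed


theorem proposition2p9:
  fixes \<mu>s :: "nat \<Rightarrow> real measure" and \<mu> :: "real measure"
  assumes "\<And>n. sets (\<mu>s n) = sets borel"
    and "\<And>n. finite_measure (\<mu>s n)"
    and "\<And>n. inj_on (cauchy_transform (\<mu>s n)) {z. Im z > 0}"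
    and "sets \<mu> = sets borel"
    and "finite_measure \<mu>"
    and "emeasure \<mu> (space \<mu>) \<noteq> 0"
    and "weakly_converges \<mu>s \<mu>"
  shows "inj_on (cauchy_transform \<mu>) {z. Im z > 0}"
proof -
  define S where "S = {z. Im z > 0}"
  have oS: "open S" unfolding S_def by (simp add: open_halfspace_Im_gt)
  have cS: "connected S" unfolding S_def by (simp add: convex_connected convex_halfspace_Im_gt)
  define F where "F = (\<lambda>n. cauchy_transform (\<mu>s n))"
  have holF: "F n holomorphic_on S" for n unfolding F_def S_def by (rule ct_holo[OF assms(1,2)])
  have mconv: "(\<lambda>n. measure (\<mu>s n) (space (\<mu>s n))) \<longlonglongrightarrow> measure \<mu> (space \<mu>)"
  proof -
    have "(\<lambda>n. \<integral>x. (\<lambda>_. 1::real) x \<partial>(\<mu>s n)) \<longlonglongrightarrow> (\<integral>x. (\<lambda>_. 1::real) x \<partial>\<mu>)"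
    proof -
      have "continuous_on UNIV (\<lambda>_::real. 1::real) \<and> bounded (range (\<lambda>_::real. 1::real))" by auto
      then show ?thesis using assms(7) unfolding weakly_converges_def by blast
    qed
    then show ?thesis by simp
  qed
  then have "Bseq (\<lambda>n. measure (\<mu>s n) (space (\<mu>s n)))" using convergent_imp_Bseq convergentI by blast
  then obtain C where C: "C > 0" "\<And>n. norm (measure (\<mu>s n) (space (\<mu>s n))) \<le> C"
    by (auto elim: BseqE)
  have bnd: "\<exists>B. \<forall>h\<in>range F. \<forall>z\<in>K. norm (h z) \<le> B" if K: "compact K" "K \<subseteq> S" for K
  proof (cases "K = {}")
    case True then show ?thesis by auto
  next
    case False
    have "continuous_on K Im" by (intro continuous_intros)
    then obtain z0 where z0: "z0 \<in> K" "\<And>z. z \<in> K \<Longrightarrow> Im z0 \<le> Im z"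
      using continuous_attains_inf[OF K(1) False] by blast
    have z0p: "Im z0 > 0" using z0 K unfolding S_def by auto
    show ?thesis
    proof (intro exI[of _ "C / Im z0"] ballI)
      fix h z assume h: "h \<in> range F" and z: "z \<in> K"
      then obtain n where hn: "h = F n" by auto
      have zp: "Im z > 0" using z K unfolding S_def by auto
      have "norm (h z) \<le> measure (\<mu>s n) (space (\<mu>s n)) / Im z"
        unfolding hn F_def by (rule ct_norm[OF assms(1,2) zp])
      also have "\<dots> \<le> C / Im z0"
        using C C(2)[of n] z0(2)[OF z] z0p by (intro frac_le) auto
      finally show "norm (h z) \<le> C / Im z0" .
    qed
  qed
  obtain g r where g: "g holomorphic_on S" "strict_mono (r :: nat \<Rightarrow> nat)"
      "\<And>x. x \<in> S \<Longrightarrow> ((\<lambda>n. F (r n) x) \<longlongrightarrow> g x) sequentially"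
      "\<And>K. \<lbrakk>compact K; K \<subseteq> S\<rbrakk> \<Longrightarrow> uniform_limit K (F \<circ> r) g sequentially"
    using Montel[where \<F>=F and \<H>="range F", OF oS _ bnd] holF by blast
  have geq: "g z = cauchy_transform \<mu> z" if z: "z \<in> S" for z
  proof -
    have zp: "Im z > 0" using z unfolding S_def by auto
    have "(\<lambda>n. F n z) \<longlonglongrightarrow> cauchy_transform \<mu> z"
      unfolding F_def by (rule weak_ct[OF assms(7) zp assms(1,2,4,5)])
    from LIMSEQ_subseq_LIMSEQ[OF this g(2)] have "(\<lambda>n. F (r n) z) \<longlonglongrightarrow> cauchy_transform \<mu> z"
      by (simp add: o_def)
    with g(3)[OF z] show ?thesis using LIMSEQ_unique by blast
  qed
  have nc: "\<not> g constant_on S"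
  proof
    assume "g constant_on S"
    then have "cauchy_transform \<mu> constant_on S"
      unfolding constant_on_def using geq by metis
    with ct_nonconst[OF assms(4,5,6)] show False unfolding S_def by blast
  qed
  have "inj_on g S"
  proof (rule Hurwitz_injective[OF oS cS _ g(1) g(4) nc])
    show "(F \<circ> r) n holomorphic_on S" for n using holF by simp
    show "inj_on ((F \<circ> r) n) S" for n using assms(3) unfolding F_def S_def by simp
  qed
  then show ?thesis unfolding S_def[symmetric] using inj_on_cong geq by metis
qed

end
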